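(* Let $M$ be a locally-finite map in $\mathbb{E}^2$ with exactly one end such that $V(M)$ is a locally finite collection of vertices, and suppose $G\le\mathrm{Isom}(\mathbb{E}^2)$ acts quasi-transitively on $M$. Then $G$ is a wallpaper group.
   Context: A map $M$ in a surface $X$ is a (simple, connected, infinite) graph embedded in $X$: vertices are distinct points, edges are curves meeting only at common endpoints, and each face is homeomorphic to an open disc. Locally-finite and number of ends refer to the underlying graph. $V(M)$ is a locally finite collection of vertices if every compact subset contains only finitely many vertices of $M$. $G$ acts on $M$ if each $g\in G$ maps $V(M)$ to itself inducing a graph automorphism (and maps the embedded map to itself); quasi-transitively means finitely many orbits on $V(M)$. A wallpaper group is a discrete group of isometries of $\mathbb{E}^2$ containing two linearly independent translations. *)

theory Defs
  imports "HOL-Analysis.Analysis"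
begin

text \<open>The Euclidean plane E^2 is modelled by the type complex (a 2-dimensional real
Euclidean space). A map M is given by its vertex set V (points of the plane) and its
edge set E, each edge being the image (point set) of an arc joining two distinct vertices.\<close>

definition is_edge :: "complex set \<Rightarrow> complex set \<Rightarrow> bool" where
  "is_edge V e \<longleftrightarrow> (\<exists>\<gamma>. arc \<gamma> \<and> path_image \<gamma> = e \<and>
      pathstart \<gamma> \<in> V \<and> pathfinish \<gamma> \<in> V \<and> e \<inter> V = {pathstart \<gamma>, pathfinish \<gamma>})"

definition adj :: "complex set \<Rightarrow> complex set set \<Rightarrow> complex \<Rightarrow> complex \<Rightarrow> bool" where
  "adj V E u v \<longleftrightarrow> u \<noteq> v \<and> (\<exists>e\<in>E. e \<inter> V = {u, v})"

definition connected_avoiding ::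
  "complex set \<Rightarrow> complex set set \<Rightarrow> complex set \<Rightarrow> complex \<Rightarrow> complex \<Rightarrow> bool" where
  "connected_avoiding V E S u v \<longleftrightarrow>
     (\<exists>p n. p 0 = u \<and> p n = v \<and> (\<forall>i\<le>n. p i \<in> V - S) \<and>
            (\<forall>i<n. adj V E (p i) (p (Suc i))))"

definition graph_connected :: "complex set \<Rightarrow> complex set set \<Rightarrow> bool" where
  "graph_connected V E \<longleftrightarrow> (\<forall>u\<in>V. \<forall>v\<in>V. connected_avoiding V E {} u v)"

definition locally_finite_graph :: "complex set \<Rightarrow> complex set set \<Rightarrow> bool" where
  "locally_finite_graph V E \<longleftrightarrow> (\<forall>u\<in>V. finite {v. adj V E u v})"

text \<open>Ends of a graph: equivalence classes of rays; two rays are equivalent if for every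
finite vertex set S their tails lie in the same component of the graph minus S.\<close>
definition is_ray :: "complex set \<Rightarrow> complex set set \<Rightarrow> (nat \<Rightarrow> complex) \<Rightarrow> bool" where
  "is_ray V E r \<longleftrightarrow> inj r \<and> (\<forall>n. r n \<in> V) \<and> (\<forall>n. adj V E (r n) (r (Suc n)))"

definition ray_equiv ::
  "complex set \<Rightarrow> complex set set \<Rightarrow> (nat \<Rightarrow> complex) \<Rightarrow> (nat \<Rightarrow> complex) \<Rightarrow> bool" where
  "ray_equiv V E r r' \<longleftrightarrow>
     (\<forall>S. finite S \<longrightarrow> (\<exists>N. \<forall>i\<ge>N. \<forall>j\<ge>N. connected_avoiding V E S (r i) (r' j)))"

definition one_ended :: "complex set \<Rightarrow> complex set set \<Rightarrow> bool" where
  "one_ended V E \<longleftrightarrow> (\<exists>r. is_ray V E r) \<and>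
     (\<forall>r r'. is_ray V E r \<longrightarrow> is_ray V E r' \<longrightarrow> ray_equiv V E r r')"

text \<open>A map in the plane: simple, connected, infinite graph embedded in E^2 whose faces
(components of the complement of the embedded graph) are open discs.\<close>
definition plane_map :: "complex set \<Rightarrow> complex set set \<Rightarrow> bool" where
  "plane_map V E \<longleftrightarrow>
     infinite V \<and>
     (\<forall>e\<in>E. is_edge V e) \<and>
     (\<forall>e\<in>E. \<forall>e'\<in>E. e \<noteq> e' \<longrightarrow> e \<inter> e' \<subseteq> V \<and> e \<inter> V \<noteq> e' \<inter> V) \<and>
     graph_connected V E \<and>
     (\<forall>F\<in>components (- (V \<union> \<Union>E)). F homeomorphic ball (0::complex) 1)"

definition locally_finite_vertices :: "complex set \<Rightarrow> bool" where
  "locally_finite_vertices V \<longleftrightarrow> (\<forall>K. compact K \<longrightarrow> finite (V \<inter> K))"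

definition isometry :: "(complex \<Rightarrow> complex) \<Rightarrow> bool" where
  "isometry g \<longleftrightarrow> bij g \<and> (\<forall>x y. dist (g x) (g y) = dist x y)"

definition isom_group :: "(complex \<Rightarrow> complex) set \<Rightarrow> bool" where
  "isom_group G \<longleftrightarrow> (\<forall>g\<in>G. isometry g) \<and> id \<in> G \<and>
     (\<forall>g\<in>G. \<forall>h\<in>G. g \<circ> h \<in> G) \<and> (\<forall>g\<in>G. inv g \<in> G)"

definition acts_on_map ::
  "(complex \<Rightarrow> complex) set \<Rightarrow> complex set \<Rightarrow> complex set set \<Rightarrow> bool" where
  "acts_on_map G V E \<longleftrightarrow> (\<forall>g\<in>G. g ` V = V \<and> (\<lambda>e. g ` e) ` E = E)"

definition quasi_transitive ::
  "(complex \<Rightarrow> complex) set \<Rightarrow> complex set \<Rightarrow> bool" where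
  "quasi_transitive G V \<longleftrightarrow> finite ((\<lambda>v. (\<lambda>g. g v) ` G) ` V)"

text \<open>Discreteness in Isom(E^2) (compact-open topology): the identity is isolated, i.e.
some basic neighbourhood of id (uniformly e-close to id on a closed disc) meets G only in id.\<close>
definition discrete_isom_group :: "(complex \<Rightarrow> complex) set \<Rightarrow> bool" where
  "discrete_isom_group G \<longleftrightarrow> (\<exists>R>0. \<exists>e>0. \<forall>g\<in>G.
      (\<forall>x\<in>cball 0 R. dist (g x) x < e) \<longrightarrow> g = id)"

definition wallpaper_group :: "(complex \<Rightarrow> complex) set \<Rightarrow> bool" where
  "wallpaper_group G \<longleftrightarrow> isom_group G \<and> discrete_isom_group G \<and>
     (\<exists>c1 c2. c1 \<noteq> c2 \<and> independent {c1, c2} \<and>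
        (\<lambda>x. x + c1) \<in> G \<and> (\<lambda>x. x + c2) \<in> G)"

end

theory Submission
  imports Defs
begin

lemma iso_char:
  assumes "\<forall>x y. dist (g x) (g y) = dist x y"
  shows "(\<forall>z. g z = (g 1 - g 0) * z + g 0) \<or> (\<forall>z. g z = (g 1 - g 0) * cnj z + g 0)"
proof -
  define a where "a = g 1 - g 0"
  define b where "b = g 0"
  have a1: "cmod a = 1" using assms[rule_format, of 1 0] by (simp add: a_def dist_norm)
  hence a0: "a \<noteq> 0" by auto
  define f where "f z = (g z - b) / a" for z
  have fd: "cmod (f z - f w) = cmod (z - w)" for z w
  proof -
    have "f z - f w = (g z - g w) / a" by (simp add: f_def diff_divide_distrib)
    hence "cmod (f z - f w) = cmod (g z - g w)" by (simp add: norm_divide a1)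
    also have "\<dots> = cmod (z - w)" using assms by (simp add: dist_norm)
    finally show ?thesis .
  qed
  have f0: "f 0 = 0" by (simp add: f_def b_def)
  have f1: "f 1 = 1" using a0 by (simp add: f_def b_def a_def)
  have fz: "f z = z \<or> f z = cnj z" for z
  proof -
    have e1: "cmod (f z) = cmod z" using fd[of z 0] f0 by simp
    have e2: "cmod (f z - 1) = cmod (z - 1)" using fd[of z 1] f1 by simp
    have q1: "Re (f z)^2 + Im (f z)^2 = Re z^2 + Im z^2" using e1 cmod_power2[of "f z"] cmod_power2[of z] by simp
    have q2: "(Re (f z) - 1)^2 + Im (f z)^2 = (Re z - 1)^2 + Im z^2" using e2 cmod_power2[of "f z - 1"] cmod_power2[of "z - 1"] by simp
    have r: "Re (f z) = Re z" using q1 q2 by (simp add: power2_eq_square algebra_simps)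
    have "Im (f z)^2 = Im z^2" using q1 r by simp
    hence "Im (f z) = Im z \<or> Im (f z) = - Im z" using power2_eq_iff by blast
    thus ?thesis using r by (auto simp: complex_eq_iff)
  qed
  have unif: "(\<forall>z. f z = z) \<or> (\<forall>z. f z = cnj z)"
  proof (rule ccontr)
    assume "\<not> ?thesis"
    then obtain z w where z: "f z \<noteq> z" and w: "f w \<noteq> cnj w" by auto
    have fz': "f z = cnj z" using z fz by auto
    have fw': "f w = w" using w fz by auto
    have iz: "Im z \<noteq> 0" using z fz' by (auto simp: complex_eq_iff)
    have iw: "Im w \<noteq> 0" using w fw' by (auto simp: complex_eq_iff)
    have "cmod (cnj z - w) = cmod (z - w)" using fd[of z w] fz' fw' by simp
    hence "(Re z - Re w)^2 + (- Im z - Im w)^2 = (Re z - Re w)^2 + (Im z - Im w)^2"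
      using cmod_power2[of "cnj z - w"] cmod_power2[of "z - w"] by simp
    hence "Im z * Im w = 0" by (simp add: power2_eq_square algebra_simps)
    thus False using iz iw by simp
  qed
  have gf: "g z = a * f z + b" for z using a0 by (simp add: f_def)
  show ?thesis
  proof (cases "\<forall>z. f z = z")
    case True
    then show ?thesis using gf unfolding a_def b_def by metis
  next
    case False
    then show ?thesis using gf unif unfolding a_def b_def by metis
  qed
qed

lemma G_iso: "isom_group G \<Longrightarrow> g \<in> G \<Longrightarrow> bij g \<and> (\<forall>x y. dist (g x) (g y) = dist x y)"
  by (auto simp: isom_group_def isometry_def)

lemma G_comp: "isom_group G \<Longrightarrow> g \<in> G \<Longrightarrow> h \<in> G \<Longrightarrow> g \<circ> h \<in> G"
  by (auto simp: isom_group_def)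

lemma G_inv: "isom_group G \<Longrightarrow> g \<in> G \<Longrightarrow> inv g \<in> G"
  by (auto simp: isom_group_def)

lemma G_id: "isom_group G \<Longrightarrow> id \<in> G"
  by (auto simp: isom_group_def)

lemma G_invl: "isom_group G \<Longrightarrow> g \<in> G \<Longrightarrow> inv g (g z) = z"
  using G_iso by (metis bij_is_inj inv_f_f)

lemma G_invr: "isom_group G \<Longrightarrow> g \<in> G \<Longrightarrow> g (inv g z) = z"
  using G_iso by (metis bij_is_surj surj_f_inv_f)

lemma G_dist: "isom_group G \<Longrightarrow> g \<in> G \<Longrightarrow> cmod (g x - g y) = cmod (x - y)"
  using G_iso by (metis dist_norm)

lemma G_V: "acts_on_map G V E \<Longrightarrow> g \<in> G \<Longrightarrow> x \<in> V \<Longrightarrow> g x \<in> V"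
  by (auto simp: acts_on_map_def)

lemma adj_V: "adj V E x y \<Longrightarrow> x \<in> V \<and> y \<in> V"
  unfolding adj_def by blast

lemma G_adj:
  assumes "isom_group G" "acts_on_map G V E" "g \<in> G" "adj V E x y"
  shows "adj V E (g x) (g y)"
proof -
  have inj: "inj g" using G_iso[OF assms(1,3)] bij_is_inj by blast
  obtain e where e: "e \<in> E" "e \<inter> V = {x, y}" "x \<noteq> y" using assms(4) by (auto simp: adj_def)
  have gV: "g ` V = V" and gE: "(\<lambda>e. g ` e) ` E = E" using assms(2,3) by (auto simp: acts_on_map_def)
  have "g ` e \<in> E" using gE e(1) by blast
  moreover have "g ` e \<inter> V = {g x, g y}"
  proof -
    have "g ` e \<inter> V = g ` e \<inter> g ` V" using gV by simp
    also have "\<dots> = g ` (e \<inter> V)" using inj by (simp add: image_Int)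
    finally show ?thesis using e(2) by simp
  qed
  moreover have "g x \<noteq> g y" using inj e(3) by (meson injD)
  ultimately show ?thesis by (auto simp: adj_def)
qed

lemma G_char: "isom_group G \<Longrightarrow> g \<in> G \<Longrightarrow>
  cmod (g 1 - g 0) = 1 \<and> ((\<forall>z. g z = (g 1 - g 0) * z + g 0) \<or> (\<forall>z. g z = (g 1 - g 0) * cnj z + g 0))"
proof -
  assume a: "isom_group G" "g \<in> G"
  have "cmod (g 1 - g 0) = 1" using G_dist[OF a, of 1 0] by simp
  then show ?thesis using iso_char G_iso[OF a] by blast
qed

lemma finite_orbits_V:
  assumes "isom_group G" "quasi_transitive G V" "\<forall>v\<in>V. finite ((\<lambda>g. g v) ` G)"
  shows "finite V"
proof -
  have "V \<subseteq> \<Union> ((\<lambda>v. (\<lambda>g. g v) ` G) ` V)"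
  proof
    fix v assume "v \<in> V"
    then show "v \<in> \<Union> ((\<lambda>v. (\<lambda>g. g v) ` G) ` V)"
      using G_id[OF assms(1)] by (auto intro!: UN_I[of v] image_eqI[of v _ id])
  qed
  moreover have "finite (\<Union> ((\<lambda>v. (\<lambda>g. g v) ` G) ` V))"
    using assms(2,3) unfolding quasi_transitive_def by blast
  ultimately show ?thesis using finite_subset by blast
qed

lemma orbit_bounded_finite:
  assumes "acts_on_map G V E" "locally_finite_vertices V" "v \<in> V"
    "\<forall>g\<in>G. g v \<in> cball c R"
  shows "finite ((\<lambda>g. g v) ` G)"
proof -
  have "(\<lambda>g. g v) ` G \<subseteq> V \<inter> cball c R" using assms G_V by blast
  moreover have "finite (V \<inter> cball c R)" using assms(2) unfolding locally_finite_vertices_def by simp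
  ultimately show ?thesis using finite_subset by blast
qed

lemma affA: fixes f :: "complex \<Rightarrow> complex" assumes "\<And>z. f z = A * z + B" shows "\<forall>z. f z = (f 1 - f 0) * z + f 0"
proof
  fix z
  have "f 1 - f 0 = A" "f 0 = B" using assms[of 1] assms[of 0] by simp_all
  thus "f z = (f 1 - f 0) * z + f 0" using assms[of z] by simp
qed

lemma transl_exists:
  assumes G: "isom_group G" and A: "acts_on_map G V E" and lf: "locally_finite_vertices V"
    and qt: "quasi_transitive G V" and inf: "infinite V"
  shows "\<exists>t. t \<noteq> 0 \<and> (\<lambda>x. x + t) \<in> G"
proof (rule ccontr)
  assume nt: "\<not> ?thesis"
  define tA where "tA g \<longleftrightarrow> (\<forall>z. g z = (g 1 - g 0) * z + g 0)" for g :: "complex \<Rightarrow> complex"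
  define tB where "tB g \<longleftrightarrow> (\<forall>z. g z = (g 1 - g 0) * cnj z + g 0)" for g :: "complex \<Rightarrow> complex"
  have AB: "tA g \<or> tB g" if "g \<in> G" for g using G_char[OF G that] by (auto simp: tA_def tB_def)
  have u1: "cmod (g 1 - g 0) = 1" if "g \<in> G" for g using G_char[OF G that] by auto
  have comm: "g \<circ> h = h \<circ> g" if "g \<in> G" "h \<in> G" "tA g" "tA h" for g h
  proof (rule ccontr)
    assume nc: "g \<circ> h \<noteq> h \<circ> g"
    define d where "d = g (h 0) - h (g 0)"
    have gh: "g (h z) = h (g z) + d" for z
    proof -
      have g': "g w = (g 1 - g 0) * w + g 0" for w using that(3) unfolding tA_def by blast
      have h': "h w = (h 1 - h 0) * w + h 0" for w using that(4) unfolding tA_def by blast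
      show ?thesis unfolding d_def
        apply (subst (1 2 3 4) g') apply (subst (1 2 3 4) h') by (simp add: algebra_simps)
    qed
    have "d \<noteq> 0" using nc gh by (auto simp: fun_eq_iff)
    moreover have "g \<circ> h \<circ> inv (h \<circ> g) \<in> G" using G_comp[OF G G_comp[OF G that(1,2)] G_inv[OF G G_comp[OF G that(2,1)]]] .
    moreover have "g \<circ> h \<circ> inv (h \<circ> g) = (\<lambda>x. x + d)"
    proof
      fix x
      have hg: "h \<circ> g \<in> G" using G_comp[OF G that(2,1)] .
      have "(g \<circ> h \<circ> inv (h \<circ> g)) x = h (g (inv (h \<circ> g) x)) + d" using gh by simp
      also have "\<dots> = x + d" using G_invr[OF G hg, of x] by simp
      finally show "(g \<circ> h \<circ> inv (h \<circ> g)) x = x + d" .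
    qed
    ultimately have "(\<lambda>x. x + d) \<in> G" "d \<noteq> 0" by auto
    thus False using nt by blast
  qed
  have BB: "tA (g \<circ> h)" if "tB g" "tB h" for g h
  proof -
    have "(g \<circ> h) z = (g 1 - g 0) * cnj (h 1 - h 0) * z + ((g 1 - g 0) * cnj (h 0) + g 0)" for z
    proof -
      have g': "g w = (g 1 - g 0) * cnj w + g 0" for w using that(1) unfolding tB_def by blast
      have h': "h w = (h 1 - h 0) * cnj w + h 0" for w using that(2) unfolding tB_def by blast
      show ?thesis apply (simp only: comp_apply) apply (subst g') apply (subst h') by (simp add: algebra_simps)
    qed
    then show ?thesis unfolding tA_def using affA by blast
  qed
  have finorb: "\<forall>v\<in>V. finite ((\<lambda>g. g v) ` G)"
  proof (cases "\<exists>r\<in>G. tA r \<and> r 1 - r 0 \<noteq> 1")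
    case True
    then obtain r where r: "r \<in> G" "tA r" "r 1 - r 0 \<noteq> 1" by blast
    define a where "a = r 1 - r 0"
    define c where "c = r 0 / (1 - a)"
    have rz: "r z = a * z + r 0" for z using r(2) unfolding tA_def a_def by blast
    have fix1: "z = c" if "r z = z" for z
    proof -
      have "(1 - a) * z = r 0" using that rz[of z] by (simp add: algebra_simps)
      thus ?thesis using r(3) unfolding c_def a_def by (simp add: field_simps)
    qed
    have rc: "r c = c"
    proof -
      have "r c = a * c + r 0" by (rule rz)
      also have "\<dots> = c" using r(3) unfolding c_def a_def[symmetric] by (simp add: field_simps)
      finally show ?thesis .
    qed
    have Afix: "h c = c" if "h \<in> G" "tA h" for h
    proof -
      have "r (h c) = h (r c)" using fun_cong[OF comm[OF r(1) that(1) r(2) that(2)], of c] by simp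
      hence "r (h c) = h c" using rc by simp
      thus ?thesis by (rule fix1)
    qed
    show ?thesis
    proof
      fix v assume v: "v \<in> V"
      show "finite ((\<lambda>g. g v) ` G)"
      proof (cases "\<exists>g0\<in>G. \<not> tA g0")
        case False
        have "\<forall>g\<in>G. g v \<in> cball c (cmod (v - c))"
        proof
          fix g assume g: "g \<in> G"
          have "cmod (g v - g c) = cmod (v - c)" using G_dist[OF G g] .
          moreover have "tA g" using False g by blast
          ultimately show "g v \<in> cball c (cmod (v - c))" using Afix[OF g] by (simp add: dist_norm norm_minus_commute)
        qed
        then show ?thesis using orbit_bounded_finite[OF A lf v] by blast
      next
        case True
        then obtain g0 where g0: "g0 \<in> G" "tB g0" using AB by blast
        have "\<forall>g\<in>G. g v \<in> cball c (max (cmod (v - c)) (cmod (v - g0 c)))"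
        proof
          fix g assume g: "g \<in> G"
          show "g v \<in> cball c (max (cmod (v - c)) (cmod (v - g0 c)))"
          proof (cases "tA g")
            case True
            have "cmod (g v - g c) = cmod (v - c)" using G_dist[OF G g] .
            thus ?thesis using Afix[OF g True] by (simp add: dist_norm norm_minus_commute)
          next
            case False
            hence gB: "tB g" using AB g by blast
            have "g (g0 c) = c" using Afix[OF G_comp[OF G g g0(1)] BB[OF gB g0(2)]] by simp
            moreover have "cmod (g v - g (g0 c)) = cmod (v - g0 c)" using G_dist[OF G g] .
            ultimately show ?thesis by (simp add: dist_norm norm_minus_commute)
          qed
        qed
        then show ?thesis using orbit_bounded_finite[OF A lf v] by blast
      qed
    qed
  next
    case False
    have Aid: "h = id" if "h \<in> G" "tA h" for h
    proof -
      have "h 1 - h 0 = 1" using False that by blast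
      have hz: "h z = z + h 0" for z
      proof -
        have "h z = (h 1 - h 0) * z + h 0" using that(2) unfolding tA_def by blast
        thus ?thesis using \<open>h 1 - h 0 = 1\<close> by simp
      qed
      have h00: "h 0 = 0"
      proof (rule ccontr)
        assume "h 0 \<noteq> 0"
        moreover have hf: "h = (\<lambda>x. x + h 0)" by (rule ext) (rule hz)
        have "(\<lambda>x. x + h 0) \<in> G" using that(1) by (simp only: hf[symmetric])
        thus False using nt \<open>h 0 \<noteq> 0\<close> by blast
      qed
      show ?thesis
      proof
        fix x
        have "h x = x + h 0" by (rule hz)
        also have "\<dots> = x" using h00 by (simp only: add_0_right)
        finally show "h x = id x" by (simp only: id_apply)
      qed
    qed
    have fin: "finite G"
    proof (cases "\<exists>g0\<in>G. \<not> tA g0")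
      case False
      hence "G \<subseteq> {id}" using Aid by blast
      thus ?thesis using finite_subset by blast
    next
      case True
      then obtain g0 where g0: "g0 \<in> G" "tB g0" using AB by blast
      have "G \<subseteq> {id, inv g0}"
      proof
        fix g assume g: "g \<in> G"
        show "g \<in> {id, inv g0}"
        proof (cases "tA g")
          case True thus ?thesis using Aid g by blast
        next
          case False
          hence "g \<circ> g0 = id" using Aid[OF G_comp[OF G g g0(1)] BB] AB g g0 by blast
          have "g = inv g0"
          proof
            fix x
            have "g x = g (g0 (inv g0 x))" using G_invr[OF G g0(1)] by simp
            also have "\<dots> = inv g0 x" using fun_cong[OF \<open>g \<circ> g0 = id\<close>] by simp
            finally show "g x = inv g0 x" .
          qed
          thus ?thesis by blast
        qed
      qed
      thus ?thesis using finite_subset by blast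
    qed
    show ?thesis using fin by blast
  qed
  show False using finite_orbits_V[OF G qt finorb] inf by blast
qed

lemma reps:
  assumes G: "isom_group G" and qt: "quasi_transitive G V"
  shows "\<exists>R. finite R \<and> R \<subseteq> V \<and> (\<forall>v\<in>V. \<exists>w\<in>R. \<exists>g\<in>G. v = g w)"
proof -
  define orb where "orb v = (\<lambda>g. g v) ` G" for v :: complex
  define Os where "Os = orb ` V"
  define R where "R = (\<lambda>ob. SOME w. w \<in> V \<and> orb w = ob) ` Os"
  have "finite Os" using qt unfolding quasi_transitive_def Os_def orb_def by simp
  hence "finite R" unfolding R_def by simp
  moreover have "R \<subseteq> V"
  proof
    fix w assume "w \<in> R"
    then obtain v where v: "v \<in> V" "w = (SOME w. w \<in> V \<and> orb w = orb v)" unfolding R_def Os_def by blast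
    have "\<exists>w. w \<in> V \<and> orb w = orb v" using v(1) by blast
    from someI_ex[OF this] show "w \<in> V" using v(2) by simp
  qed
  moreover have "\<forall>v\<in>V. \<exists>w\<in>R. \<exists>g\<in>G. v = g w"
  proof
    fix v assume v: "v \<in> V"
    define w where "w = (SOME w. w \<in> V \<and> orb w = orb v)"
    have "\<exists>w. w \<in> V \<and> orb w = orb v" using v by blast
    from someI_ex[OF this] have w: "orb w = orb v" unfolding w_def by simp
    have "w \<in> R" unfolding R_def Os_def w_def using v by blast
    moreover have "v \<in> orb v" unfolding orb_def using G_id[OF G] by (auto intro!: image_eqI[of v _ id])
    hence "\<exists>g\<in>G. v = g w" using w unfolding orb_def by auto
    ultimately show "\<exists>w\<in>R. \<exists>g\<in>G. v = g w" by blast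
  qed
  ultimately show ?thesis by blast
qed

lemma edge_bound:
  assumes G: "isom_group G" and A: "acts_on_map G V E" and lfg: "locally_finite_graph V E"
    and qt: "quasi_transitive G V"
  shows "\<exists>D. \<forall>u w. adj V E u w \<longrightarrow> cmod (u - w) \<le> D"
proof -
  obtain R where R: "finite R" "R \<subseteq> V" "\<forall>v\<in>V. \<exists>w\<in>R. \<exists>g\<in>G. v = g w" using reps[OF G qt] by blast
  define N where "N = R \<union> (\<Union>x\<in>R. {y. adj V E x y})"
  have "finite N" unfolding N_def using R(1,2) lfg unfolding locally_finite_graph_def by blast
  then obtain B where B: "\<forall>y\<in>N. cmod y \<le> B" using finite_imp_bounded bounded_iff by metis
  have "cmod (u - w) \<le> 2 * B" if uw: "adj V E u w" for u w
  proof -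
    have "u \<in> V" using adj_V[OF uw] by blast
    then obtain x g where x: "x \<in> R" "g \<in> G" "u = g x" using R(3) by blast
    have ig: "inv g \<in> G" using G_inv[OF G x(2)] .
    have "adj V E (inv g u) (inv g w)" using G_adj[OF G A ig uw] .
    moreover have "inv g u = x" using x(3) G_invl[OF G x(2)] by simp
    ultimately have "inv g w \<in> N" using x(1) unfolding N_def by blast
    hence "cmod (inv g w) \<le> B" using B by blast
    moreover have "cmod x \<le> B" using B x(1) unfolding N_def by blast
    moreover have "cmod (u - w) = cmod (inv g u - inv g w)" using G_dist[OF G ig] by simp
    ultimately show ?thesis using \<open>inv g u = x\<close> norm_triangle_ineq4[of x "inv g w"] by simp
  qed
  thus ?thesis by blast
qed

lemma walk_ray:
  fixes W :: "nat \<Rightarrow> complex"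
  assumes adjW: "\<And>m. adj V E (W m) (W (Suc m))" and fin: "\<And>x. finite {m. W m = x}"
  shows "\<exists>T. strict_mono T \<and> is_ray V E (W \<circ> T)"
proof -
  define lst where "lst m = Max {m'. W m' = W m}" for m
  have l1: "W (lst m) = W m" for m
  proof -
    have "lst m \<in> {m'. W m' = W m}" unfolding lst_def by (rule Max_in) (use fin in auto)
    thus ?thesis by simp
  qed
  have l2: "m \<le> lst m" for m unfolding lst_def by (rule Max_ge) (use fin in auto)
  have l4: "lst m = lst m'" if "W m = W m'" for m m' unfolding lst_def using that by simp
  have l3: "lst (lst m) = lst m" for m using l4[OF l1[of m]] .
  define T where "T = rec_nat (lst 0) (\<lambda>k Tk. lst (Suc Tk))"
  have T0: "T 0 = lst 0" and TS: "T (Suc k) = lst (Suc (T k))" for k unfolding T_def by simp_all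
  have sm: "strict_mono T" unfolding strict_mono_Suc_iff
  proof
    fix k show "T k < T (Suc k)" using TS[of k] l2[of "Suc (T k)"] by simp
  qed
  have lT: "lst (T k) = T k" for k by (cases k) (simp_all add: T0 TS l3)
  have "inj (W \<circ> T)"
  proof (rule injI)
    fix i j assume "(W \<circ> T) i = (W \<circ> T) j"
    hence "lst (T i) = lst (T j)" using l4[of "T i" "T j"] by simp
    hence "T i = T j" using lT by simp
    thus "i = j" using strict_mono_eq[OF sm] by simp
  qed
  moreover have "adj V E ((W \<circ> T) k) ((W \<circ> T) (Suc k))" for k
    using adjW[of "T k"] l1[of "Suc (T k)"] TS[of k] by simp
  moreover have "(W \<circ> T) k \<in> V" for k using adj_V[OF adjW[of "T k"]] by simp
  ultimately show ?thesis using sm unfolding is_ray_def by blast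
qed

lemma shift_adj:
  assumes sh: "\<And>x y. adj V E x y \<Longrightarrow> adj V E (x + u) (y + u)"
  shows "adj V E x y \<Longrightarrow> adj V E (x + of_nat k * u) (y + of_nat k * u)"
proof (induction k)
  case 0 thus ?case by simp
next
  case (Suc k)
  have "adj V E (x + of_nat k * u + u) (y + of_nat k * u + u)" using sh[OF Suc.IH[OF Suc.prems]] .
  thus ?case by (simp add: algebra_simps)
qed

lemma Re_shift: "Re ((x + of_nat k * u) * cnj u) = Re (x * cnj u) + real k * (cmod u)^2"
proof -
  have "(x + of_nat k * u) * cnj u = x * cnj u + of_nat k * (u * cnj u)" by (simp add: algebra_simps)
  also have "u * cnj u = of_real ((cmod u)^2)" by (simp add: complex_mult_cnj cmod_power2)
  finally show ?thesis by simp
qed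

lemma dir_ray:
  assumes gc: "graph_connected V E" and v: "v \<in> V" and u0: "u \<noteq> 0"
    and sh: "\<And>x y. adj V E x y \<Longrightarrow> adj V E (x + u) (y + u)"
    and shV: "\<And>x. x \<in> V \<Longrightarrow> x + u \<in> V"
  shows "\<exists>r. is_ray V E r \<and> (\<forall>K. \<exists>N. \<forall>k\<ge>N. Re (r k * cnj u) > K)"
proof -
  have "v + u \<in> V" using shV v .
  then obtain p n where p: "p 0 = v" "p n = v + u" "\<forall>i<n. adj V E (p i) (p (Suc i))"
    using gc v unfolding graph_connected_def connected_avoiding_def by blast
  have n0: "n \<noteq> 0"
  proof
    assume "n = 0" thus False using p(1,2) u0 by simp
  qed
  define W where "W m = p (m mod n) + of_nat (m div n) * u" for m
  have adjW: "adj V E (W m) (W (Suc m))" for m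
  proof (cases "Suc (m mod n) = n")
    case True
    have "Suc m mod n = 0" using True by (simp add: mod_Suc)
    hence d: "Suc m div n = Suc (m div n)" by (simp add: div_Suc)
    have "W (Suc m) = p 0 + of_nat (Suc (m div n)) * u" unfolding W_def d \<open>Suc m mod n = 0\<close> ..
    also have "\<dots> = p n + of_nat (m div n) * u" using p(1,2) by (simp add: algebra_simps)
    finally have e: "W (Suc m) = p (Suc (m mod n)) + of_nat (m div n) * u" using True by simp
    have "adj V E (p (m mod n)) (p (Suc (m mod n)))" using p(3) n0 by simp
    from shift_adj[OF sh this, of "m div n"] show ?thesis unfolding e unfolding W_def .
  next
    case False
    have "Suc m mod n = Suc (m mod n)" using False by (simp add: mod_Suc)
    moreover hence "Suc m div n = m div n" by (simp add: div_Suc)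
    ultimately have e: "W (Suc m) = p (Suc (m mod n)) + of_nat (m div n) * u" unfolding W_def by simp
    have "m mod n < n" using n0 by simp
    hence "adj V E (p (m mod n)) (p (Suc (m mod n)))" using p(3) by simp
    from shift_adj[OF sh this, of "m div n"] show ?thesis unfolding e unfolding W_def .
  qed
  define s where "s x = Re (x * cnj u)" for x
  define c where "c = - (\<Sum>j<n. \<bar>s (p j)\<bar>)"
  have cb: "c \<le> s (p j)" if "j < n" for j
  proof -
    have "\<bar>s (p j)\<bar> \<le> (\<Sum>j<n. \<bar>s (p j)\<bar>)" by (rule member_le_sum) (use that in auto)
    thus ?thesis unfolding c_def by linarith
  qed
  have u2: "(cmod u)^2 > 0" using u0 by simp
  have sW: "s (W m) \<ge> c + real (m div n) * (cmod u)^2" for m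
  proof -
    have "s (W m) = s (p (m mod n)) + real (m div n) * (cmod u)^2" unfolding s_def W_def by (rule Re_shift)
    moreover have "c \<le> s (p (m mod n))" using cb n0 by simp
    ultimately show ?thesis by simp
  qed
  have fin: "finite {m. W m = x}" for x
  proof -
    define B where "B = nat \<lceil>(s x - c) / (cmod u)^2\<rceil>"
    have "{m. W m = x} \<subseteq> {..< n * (B + 1)}"
    proof
      fix m assume "m \<in> {m. W m = x}"
      hence "c + real (m div n) * (cmod u)^2 \<le> s x" using sW[of m] by simp
      hence "real (m div n) \<le> (s x - c) / (cmod u)^2" using u2 by (simp add: field_simps)
      hence "m div n \<le> B" unfolding B_def by linarith
      hence "m div n < B + 1" by simp
      hence "m < n * (B + 1)" using n0 by (metis div_less_iff_less_mult mult.commute not_gr0)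
      thus "m \<in> {..< n * (B + 1)}" by simp
    qed
    thus ?thesis using finite_subset by blast
  qed
  obtain T where T: "strict_mono T" "is_ray V E (W \<circ> T)" using walk_ray[OF adjW fin] by blast
  have "\<forall>K. \<exists>N. \<forall>k\<ge>N. Re ((W \<circ> T) k * cnj u) > K"
  proof
    fix K
    define B where "B = nat \<lceil>(K - c) / (cmod u)^2\<rceil>"
    have "\<forall>k\<ge>n * (B + 1). Re ((W \<circ> T) k * cnj u) > K"
    proof (intro allI impI)
      fix k assume k: "n * (B + 1) \<le> k"
      have "k \<le> T k" using seq_suble[OF T(1)] .
      hence "n * (B + 1) \<le> T k" using k by simp
      hence "B + 1 \<le> T k div n" using n0 by (metis div_le_mono nonzero_mult_div_cancel_left)
      hence "real B + 1 \<le> real (T k div n)" by linarith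
      moreover have "(K - c) / (cmod u)^2 \<le> real B" unfolding B_def by linarith
      ultimately have "(K - c) / (cmod u)^2 < real (T k div n)" by linarith
      hence "K - c < real (T k div n) * (cmod u)^2" using u2 by (simp add: field_simps)
      hence "K < s (W (T k))" using sW[of "T k"] by linarith
      thus "Re ((W \<circ> T) k * cnj u) > K" unfolding s_def by simp
    qed
    thus "\<exists>N. \<forall>k\<ge>N. Re ((W \<circ> T) k * cnj u) > K" by blast
  qed
  thus ?thesis using T(2) by blast
qed

lemma conj_transl:
  assumes G: "isom_group G" and g: "g \<in> G" and t: "(\<lambda>x. x + t) \<in> G"
  shows "(\<lambda>x. g (inv g x + t)) \<in> G"
proof -
  have "g \<circ> (\<lambda>x. x + t) \<circ> inv g \<in> G" using G_comp[OF G G_comp[OF G g t] G_inv[OF G g]] .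
  moreover have "g \<circ> (\<lambda>x. x + t) \<circ> inv g = (\<lambda>x. g (inv g x + t))" by (simp add: comp_def)
  ultimately show ?thesis by simp
qed

lemma G_struct:
  assumes G: "isom_group G" and g: "g \<in> G" and t0: "t \<noteq> 0" and t: "(\<lambda>x. x + t) \<in> G"
    and H: "\<forall>t'. (\<lambda>x. x + t') \<in> G \<longrightarrow> (\<exists>r::real. t' = of_real r * t)"
  shows "\<exists>r::real. (r = 1 \<or> r = -1) \<and> ((\<forall>w. g w = of_real r * w + g 0) \<or>
           (\<forall>w. g w = (of_real r * t / cnj t) * cnj w + g 0))"
proof -
  define a where "a = g 1 - g 0"
  have a1: "cmod a = 1" and ch: "(\<forall>z. g z = a * z + g 0) \<or> (\<forall>z. g z = a * cnj z + g 0)"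
    using G_char[OF G g] unfolding a_def by auto
  have a0: "a \<noteq> 0" using a1 by auto
  have ct: "(\<lambda>x. g (inv g x + t)) \<in> G" using conj_transl[OF G g t] .
  show ?thesis
  proof (cases "\<forall>z. g z = a * z + g 0")
    case True
    have invA: "inv g x = (x - g 0) / a" for x
    proof -
      have "g ((x - g 0) / a) = a * ((x - g 0) / a) + g 0" using True by blast
      also have "\<dots> = x" using a0 by simp
      finally have "inv g (g ((x - g 0) / a)) = inv g x" by simp
      thus ?thesis using G_invl[OF G g] by simp
    qed
    have "g (inv g x + t) = x + a * t" for x
    proof -
      have "g (inv g x + t) = a * (inv g x + t) + g 0" using True by blast
      hence "g (inv g x + t) = a * ((x - g 0) / a + t) + g 0" unfolding invA[of x] .
      also have "\<dots> = x + a * t" using a0 by (simp add: field_simps)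
      finally show ?thesis .
    qed
    hence "(\<lambda>x. x + a * t) \<in> G" using ct by simp
    then obtain r where r: "a * t = of_real r * t" using H by blast
    hence ar: "a = of_real r" using t0 by simp
    hence "\<bar>r\<bar> = 1" using a1 by simp
    hence "r = 1 \<or> r = -1" by linarith
    thus ?thesis using True ar by blast
  next
    case False
    hence B: "\<forall>z. g z = a * cnj z + g 0" using ch by blast
    have invB: "inv g x = cnj ((x - g 0) / a)" for x
    proof -
      have "g (cnj ((x - g 0) / a)) = a * cnj (cnj ((x - g 0) / a)) + g 0" using B by blast
      also have "\<dots> = x" using a0 by simp
      finally have "inv g (g (cnj ((x - g 0) / a))) = inv g x" by simp
      thus ?thesis using G_invl[OF G g] by simp
    qed
    have "g (inv g x + t) = x + a * cnj t" for x
    proof -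
      have "g (inv g x + t) = a * cnj (inv g x + t) + g 0" using B by blast
      hence "g (inv g x + t) = a * cnj (cnj ((x - g 0) / a) + t) + g 0" unfolding invB[of x] .
      also have "\<dots> = x + a * cnj t" using a0 by (simp add: field_simps)
      finally show ?thesis .
    qed
    hence "(\<lambda>x. x + a * cnj t) \<in> G" using ct by simp
    then obtain r where r: "a * cnj t = of_real r * t" using H by blast
    have ct0: "cnj t \<noteq> 0" using t0 by simp
    hence ar: "a = of_real r * t / cnj t" using r by (simp add: field_simps)
    have "cmod (a * cnj t) = cmod t" using a1 by (simp add: norm_mult)
    hence "\<bar>r\<bar> * cmod t = cmod t" using r by (simp add: norm_mult)
    hence "\<bar>r\<bar> = 1" using t0 by simp
    hence "r = 1 \<or> r = -1" by linarith
    thus ?thesis using B ar by blast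
  qed
qed

lemma q_lin:
  assumes G: "isom_group G" and g: "g \<in> G" and t0: "t \<noteq> 0" and t: "(\<lambda>x. x + t) \<in> G"
    and H: "\<forall>t'. (\<lambda>x. x + t') \<in> G \<longrightarrow> (\<exists>r::real. t' = of_real r * t)"
  shows "\<bar>Im (g z * cnj t)\<bar> \<le> \<bar>Im (z * cnj t)\<bar> + \<bar>Im (g 0 * cnj t)\<bar>"
proof -
  obtain r :: real where r: "r = 1 \<or> r = -1" and
    ch: "(\<forall>w. g w = of_real r * w + g 0) \<or> (\<forall>w. g w = (of_real r * t / cnj t) * cnj w + g 0)"
    using G_struct[OF G g t0 t H] by blast
  have "\<bar>Im (g z * cnj t) - Im (g 0 * cnj t)\<bar> = \<bar>Im (z * cnj t)\<bar>"
  proof (cases "\<forall>w. g w = of_real r * w + g 0")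
    case True
    have gz: "g z = of_real r * z + g 0" using True by blast
    have "g z * cnj t - g 0 * cnj t = of_real r * (z * cnj t)" unfolding gz by (simp add: algebra_simps)
    from arg_cong[where f=Im, OF this]
    have "Im (g z * cnj t) - Im (g 0 * cnj t) = r * Im (z * cnj t)" by simp
    thus ?thesis using r by auto
  next
    case False
    hence B: "\<forall>w. g w = (of_real r * t / cnj t) * cnj w + g 0" using ch by blast
    have ct0: "cnj t \<noteq> 0" using t0 by simp
    have gz: "g z = (of_real r * t / cnj t) * cnj z + g 0" using B by blast
    have "g z * cnj t - g 0 * cnj t = (of_real r * t / cnj t) * cnj z * cnj t" unfolding gz by (simp add: algebra_simps)
    also have "\<dots> = of_real r * cnj (z * cnj t)" using ct0 by (simp add: field_simps)
    finally have "Im (g z * cnj t - g 0 * cnj t) = Im (of_real r * cnj (z * cnj t))" by simp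
    hence "Im (g z * cnj t) - Im (g 0 * cnj t) = - r * Im (z * cnj t)" by (simp add: algebra_simps)
    thus ?thesis using r by auto
  qed
  thus ?thesis by linarith
qed

lemma Q_finite:
  assumes G: "isom_group G" and t0: "t \<noteq> 0" and t: "(\<lambda>x. x + t) \<in> G"
    and H: "\<forall>t'. (\<lambda>x. x + t') \<in> G \<longrightarrow> (\<exists>r::real. t' = of_real r * t)"
  shows "finite ((\<lambda>g. Im (g 0 * cnj t)) ` G)"
proof -
  define lp where "lp g = (\<lambda>w. g w - g 0)" for g :: "complex \<Rightarrow> complex"
  define LP where "LP = (\<lambda>(r::real, b). if b then (\<lambda>w. of_real r * w) else (\<lambda>w. (of_real r * t / cnj t) * cnj w)) ` ({1,-1} \<times> UNIV)"
  have fLP: "finite LP" unfolding LP_def by simp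
  have "lp ` G \<subseteq> LP"
  proof
    fix l assume "l \<in> lp ` G"
    then obtain g where g: "g \<in> G" "l = lp g" by blast
    obtain r :: real where r: "r = 1 \<or> r = -1" and
      ch: "(\<forall>w. g w = of_real r * w + g 0) \<or> (\<forall>w. g w = (of_real r * t / cnj t) * cnj w + g 0)"
      using G_struct[OF G g(1) t0 t H] by blast
    show "l \<in> LP"
    proof (cases "\<forall>w. g w = of_real r * w + g 0")
      case True
      have "l = (\<lambda>w. of_real r * w)"
      proof
        fix w have "g w = of_real r * w + g 0" using True by blast
        thus "l w = of_real r * w" unfolding g(2) lp_def by simp
      qed
      thus ?thesis unfolding LP_def using r by (auto intro!: image_eqI[of _ _ "(r, True)"])
    next
      case False
      hence B: "\<forall>w. g w = (of_real r * t / cnj t) * cnj w + g 0" using ch by blast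
      have "l = (\<lambda>w. (of_real r * t / cnj t) * cnj w)"
      proof
        fix w have "g w = (of_real r * t / cnj t) * cnj w + g 0" using B by blast
        thus "l w = (of_real r * t / cnj t) * cnj w" unfolding g(2) lp_def by simp
      qed
      thus ?thesis unfolding LP_def using r by (auto intro!: image_eqI[of _ _ "(r, False)"])
    qed
  qed
  hence flp: "finite (lp ` G)" using fLP finite_subset by blast
  define F where "F l = Im ((SOME g. g \<in> G \<and> lp g = l) 0 * cnj t)" for l
  have "Im (g 0 * cnj t) = F (lp g)" if g: "g \<in> G" for g
  proof -
    define g' where "g' = (SOME g'. g' \<in> G \<and> lp g' = lp g)"
    have "\<exists>g'. g' \<in> G \<and> lp g' = lp g" using g by blast
    from someI_ex[OF this] have g': "g' \<in> G" "lp g' = lp g" unfolding g'_def by auto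
    have lpe: "g' y - g' 0 = g y - g 0" for y using fun_cong[OF g'(2), of y] unfolding lp_def by simp
    have "g' \<circ> inv g = (\<lambda>x. x + (g' 0 - g 0))"
    proof
      fix x
      have "(g' \<circ> inv g) x = g' (inv g x)" by simp
      also have "\<dots> = g (inv g x) - g 0 + g' 0" using lpe[of "inv g x"] by (simp add: algebra_simps)
      also have "\<dots> = x + (g' 0 - g 0)" using G_invr[OF G g] by simp
      finally show "(g' \<circ> inv g) x = x + (g' 0 - g 0)" .
    qed
    moreover have "g' \<circ> inv g \<in> G" using G_comp[OF G g'(1) G_inv[OF G g]] .
    ultimately have "(\<lambda>x. x + (g' 0 - g 0)) \<in> G" by simp
    then obtain \<rho> :: real where rho: "g' 0 - g 0 = of_real \<rho> * t" using H by blast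
    have "t * cnj t = of_real ((cmod t)^2)" by (simp add: complex_mult_cnj cmod_power2)
    hence "(g' 0 - g 0) * cnj t = of_real (\<rho> * (cmod t)^2)" unfolding rho by (simp add: mult.assoc)
    hence "Im ((g' 0 - g 0) * cnj t) = 0" by simp
    hence "Im (g' 0 * cnj t) = Im (g 0 * cnj t)" by (simp add: algebra_simps)
    thus ?thesis unfolding F_def g'_def[symmetric] by simp
  qed
  hence "(\<lambda>g. Im (g 0 * cnj t)) ` G \<subseteq> F ` (lp ` G)" by auto
  thus ?thesis using flp finite_subset by blast
qed

lemma strip:
  assumes G: "isom_group G" and A: "acts_on_map G V E" and qt: "quasi_transitive G V"
    and t0: "t \<noteq> 0" and t: "(\<lambda>x. x + t) \<in> G"
    and H: "\<forall>t'. (\<lambda>x. x + t') \<in> G \<longrightarrow> (\<exists>r::real. t' = of_real r * t)"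
  shows "\<exists>Wd. \<forall>v\<in>V. \<bar>Im (v * cnj t)\<bar> \<le> Wd"
proof -
  obtain R where R: "finite R" "R \<subseteq> V" "\<forall>v\<in>V. \<exists>w\<in>R. \<exists>g\<in>G. v = g w" using reps[OF G qt] by blast
  define Q where "Q = (\<lambda>g. Im (g 0 * cnj t)) ` G"
  have fQ: "finite Q" unfolding Q_def using Q_finite[OF G t0 t H] .
  define B1 where "B1 = (\<Sum>w\<in>R. \<bar>Im (w * cnj t)\<bar>)"
  define B2 where "B2 = (\<Sum>y\<in>Q. \<bar>y\<bar>)"
  have "\<bar>Im (v * cnj t)\<bar> \<le> B1 + B2" if v: "v \<in> V" for v
  proof -
    obtain w g where wg: "w \<in> R" "g \<in> G" "v = g w" using R(3) v by blast
    have "\<bar>Im (w * cnj t)\<bar> \<le> B1" unfolding B1_def by (rule member_le_sum) (use wg R in auto)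
    moreover have "\<bar>Im (g 0 * cnj t)\<bar> \<le> B2" unfolding B2_def
      by (rule member_le_sum) (use wg fQ in \<open>auto simp: Q_def\<close>)
    moreover have "\<bar>Im (g w * cnj t)\<bar> \<le> \<bar>Im (w * cnj t)\<bar> + \<bar>Im (g 0 * cnj t)\<bar>"
      using q_lin[OF G wg(2) t0 t H] .
    ultimately show ?thesis using wg(3) by simp
  qed
  thus ?thesis by blast
qed

lemma transl_inv:
  assumes G: "isom_group G" and t: "(\<lambda>x. x + t) \<in> G"
  shows "(\<lambda>x. x + - t) \<in> G"
proof -
  have "inv (\<lambda>x. x + t) = (\<lambda>x. x + - t)"
  proof
    fix y
    have "inv (\<lambda>x. x + t) ((y - t) + t) = y - t" using G_invl[OF G t, of "y - t"] by simp
    thus "inv (\<lambda>x. x + t) y = y + - t" by simp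
  qed
  thus ?thesis using G_inv[OF G t] by simp
qed

lemma strip_contra:
  assumes pm: "plane_map V E" and lfg: "locally_finite_graph V E" and oe: "one_ended V E"
    and lfv: "locally_finite_vertices V" and G: "isom_group G" and A: "acts_on_map G V E"
    and qt: "quasi_transitive G V"
    and t0: "t \<noteq> 0" and t: "(\<lambda>x. x + t) \<in> G"
    and H: "\<forall>t'. (\<lambda>x. x + t') \<in> G \<longrightarrow> (\<exists>r::real. t' = of_real r * t)"
  shows False
proof -
  have gc: "graph_connected V E" and inf: "infinite V" using pm unfolding plane_map_def by auto
  then obtain v where v: "v \<in> V" by (metis finite.emptyI ex_in_conv)
  obtain D where D: "\<forall>u w. adj V E u w \<longrightarrow> cmod (u - w) \<le> D" using edge_bound[OF G A lfg qt] by blast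
  obtain Wd where Wd: "\<forall>v\<in>V. \<bar>Im (v * cnj t)\<bar> \<le> Wd" using strip[OF G A qt t0 t H] by blast
  have tm: "(\<lambda>x. x + - t) \<in> G" using transl_inv[OF G t] .
  obtain r1 where r1: "is_ray V E r1" "\<forall>K. \<exists>N. \<forall>k\<ge>N. Re (r1 k * cnj t) > K"
    using dir_ray[OF gc v t0, of] G_adj[OF G A t] G_V[OF A t] by blast
  have mt0: "- t \<noteq> 0" using t0 by simp
  obtain r2 where r2: "is_ray V E r2" "\<forall>K. \<exists>N. \<forall>k\<ge>N. Re (r2 k * cnj (- t)) > K"
    using dir_ray[OF gc v mt0] G_adj[OF G A tm] G_V[OF A tm] by blast
  define K where "K = \<bar>D\<bar> * cmod t + 1"
  have K1: "K \<ge> 1" unfolding K_def by simp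
  define S where "S = {z \<in> V. \<bar>Re (z * cnj t)\<bar> \<le> K}"
  have "S \<subseteq> V \<inter> cball 0 ((K + Wd) / cmod t)"
  proof
    fix z assume z: "z \<in> S"
    have "cmod (z * cnj t) \<le> \<bar>Re (z * cnj t)\<bar> + \<bar>Im (z * cnj t)\<bar>" by (rule cmod_le)
    also have "\<dots> \<le> K + Wd" using z Wd unfolding S_def by (simp add: add_mono)
    finally have "cmod z * cmod t \<le> K + Wd" by (simp add: norm_mult)
    hence "cmod z \<le> (K + Wd) / cmod t" using t0 by (simp add: field_simps)
    thus "z \<in> V \<inter> cball 0 ((K + Wd) / cmod t)" using z unfolding S_def by auto
  qed
  moreover have "finite (V \<inter> cball 0 ((K + Wd) / cmod t))" using lfv unfolding locally_finite_vertices_def by simp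
  ultimately have fS: "finite S" using finite_subset by blast
  have "ray_equiv V E r1 r2" using oe r1(1) r2(1) unfolding one_ended_def by blast
  then obtain N where N: "\<forall>i\<ge>N. \<forall>j\<ge>N. connected_avoiding V E S (r1 i) (r2 j)"
    using fS unfolding ray_equiv_def by blast
  obtain N1 where N1: "\<forall>k\<ge>N1. Re (r1 k * cnj t) > K" using r1(2) by blast
  obtain N2 where N2: "\<forall>k\<ge>N2. Re (r2 k * cnj (- t)) > K" using r2(2) by blast
  define i where "i = max N N1"
  define j where "j = max N N2"
  have "connected_avoiding V E S (r1 i) (r2 j)" using N unfolding i_def j_def by simp
  then obtain p n where p: "p 0 = r1 i" "p n = r2 j" "\<forall>m\<le>n. p m \<in> V - S"
    "\<forall>m<n. adj V E (p m) (p (Suc m))" unfolding connected_avoiding_def by blast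
  have ind: "m \<le> n \<longrightarrow> Re (p m * cnj t) > K" for m
  proof (induction m)
    case 0
    show ?case using N1 p(1) unfolding i_def by simp
  next
    case (Suc m)
    show ?case
    proof
      assume mn: "Suc m \<le> n"
      hence IH: "Re (p m * cnj t) > K" using Suc.IH by simp
      have "adj V E (p m) (p (Suc m))" using p(4) mn by simp
      hence "cmod (p m - p (Suc m)) \<le> D" using D by blast
      hence "cmod ((p m - p (Suc m)) * cnj t) \<le> \<bar>D\<bar> * cmod t"
        by (simp add: norm_mult mult_right_mono)
      moreover have "\<bar>Re ((p m - p (Suc m)) * cnj t)\<bar> \<le> cmod ((p m - p (Suc m)) * cnj t)" by (rule abs_Re_le_cmod)
      ultimately have "\<bar>Re (p m * cnj t) - Re (p (Suc m) * cnj t)\<bar> \<le> K - 1"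
        unfolding K_def by (simp add: algebra_simps)
      hence "Re (p (Suc m) * cnj t) > 1 - K + K - 1 + 1 - 1" using IH by linarith
      moreover have "p (Suc m) \<in> V - S" using p(3) mn by blast
      hence "\<bar>Re (p (Suc m) * cnj t)\<bar> > K" unfolding S_def by auto
      ultimately show "Re (p (Suc m) * cnj t) > K" using K1 IH
        \<open>\<bar>Re (p m * cnj t) - Re (p (Suc m) * cnj t)\<bar> \<le> K - 1\<close> by linarith
    qed
  qed
  have "Re (p n * cnj t) > K" using ind[of n] by simp
  hence "Re (r2 j * cnj t) > K" using p(2) by simp
  moreover have "Re (r2 j * cnj (- t)) > K" using N2 unfolding j_def by simp
  ultimately show False using K1 by simp
qed

lemma isolated_vertex:
  assumes lfv: "locally_finite_vertices V" and p: "p \<in> V"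
  shows "\<exists>\<delta>>0. \<forall>w\<in>V. dist w p < \<delta> \<longrightarrow> w = p"
proof -
  have "finite (V \<inter> cball p 1)" using lfv unfolding locally_finite_vertices_def by simp
  from finite_set_avoid[OF this, of p] obtain d where d: "d > 0" "\<forall>x\<in>V \<inter> cball p 1. x \<noteq> p \<longrightarrow> d \<le> dist p x" by blast
  have "\<forall>w\<in>V. dist w p < min d 1 \<longrightarrow> w = p"
  proof (intro ballI impI)
    fix w assume w: "w \<in> V" "dist w p < min d 1"
    hence "w \<in> cball p 1" by (simp add: dist_commute)
    show "w = p"
    proof (rule ccontr)
      assume "w \<noteq> p"
      hence "d \<le> dist p w" using d w \<open>w \<in> cball p 1\<close> by blast
      thus False using w(2) by (simp add: dist_commute)
    qed
  qed
  thus ?thesis using d(1) by (intro exI[of _ "min d 1"]) simp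
qed

lemma discrete:
  assumes G: "isom_group G" and A: "acts_on_map G V E" and lfv: "locally_finite_vertices V"
    and v: "v \<in> V" and t0: "t \<noteq> 0" and t: "(\<lambda>x. x + t) \<in> G" and t': "(\<lambda>x. x + t') \<in> G"
    and NM: "\<forall>r::real. t' \<noteq> of_real r * t"
  shows "discrete_isom_group G"
proof -
  have v2: "v + t \<in> V" using G_V[OF A t v] by simp
  have v3: "v + t' \<in> V" using G_V[OF A t' v] by simp
  obtain d1 where d1: "d1 > 0" "\<forall>w\<in>V. dist w v < d1 \<longrightarrow> w = v" using isolated_vertex[OF lfv v] by blast
  obtain d2 where d2: "d2 > 0" "\<forall>w\<in>V. dist w (v + t) < d2 \<longrightarrow> w = v + t" using isolated_vertex[OF lfv v2] by blast
  obtain d3 where d3: "d3 > 0" "\<forall>w\<in>V. dist w (v + t') < d3 \<longrightarrow> w = v + t'" using isolated_vertex[OF lfv v3] by blast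
  define R where "R = cmod v + cmod t + cmod t' + 1"
  define e where "e = min d1 (min d2 d3)"
  have "\<forall>g\<in>G. (\<forall>x\<in>cball 0 R. dist (g x) x < e) \<longrightarrow> g = id"
  proof (intro ballI impI)
    fix g assume g: "g \<in> G" and cl: "\<forall>x\<in>cball 0 R. dist (g x) x < e"
    have "v \<in> cball 0 R" unfolding R_def by simp
    hence "dist (g v) v < d1" using cl unfolding e_def by fastforce
    hence f1: "g v = v" using d1 G_V[OF A g v] by blast
    have "cmod (v + t) \<le> R" unfolding R_def using norm_triangle_ineq[of v t] norm_ge_zero[of t'] by linarith
    hence "v + t \<in> cball 0 R" by simp
    hence "dist (g (v + t)) (v + t) < d2" using cl unfolding e_def by fastforce
    hence f2: "g (v + t) = v + t" using d2 G_V[OF A g v2] by blast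
    have "cmod (v + t') \<le> R" unfolding R_def using norm_triangle_ineq[of v t'] norm_ge_zero[of t] by linarith
    hence "v + t' \<in> cball 0 R" by simp
    hence "dist (g (v + t')) (v + t') < d3" using cl unfolding e_def by fastforce
    hence f3: "g (v + t') = v + t'" using d3 G_V[OF A g v3] by blast
    define a where "a = g 1 - g 0"
    have ch: "(\<forall>z. g z = a * z + g 0) \<or> (\<forall>z. g z = a * cnj z + g 0)"
      using G_char[OF G g] unfolding a_def by auto
    show "g = id"
    proof (cases "\<forall>z. g z = a * z + g 0")
      case True
      have e1: "a * v + g 0 = v" using f1 True by metis
      have e2: "a * (v + t) + g 0 = v + t" using f2 True by metis
      have "a * (v + t) + g 0 - (a * v + g 0) = (v + t) - v" using e1 e2 by simp
      hence "a * t = t" by (simp add: algebra_simps)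
      hence a1: "a = 1" using t0 by simp
      hence "g 0 = 0" using e1 by simp
      show "g = id"
      proof
        fix z have "g z = a * z + g 0" using True by blast
        thus "g z = id z" using a1 \<open>g 0 = 0\<close> by simp
      qed
    next
      case False
      hence B: "\<forall>z. g z = a * cnj z + g 0" using ch by blast
      have e1: "a * cnj v + g 0 = v" using f1 B by metis
      have e2: "a * cnj (v + t) + g 0 = v + t" using f2 B by metis
      have e3: "a * cnj (v + t') + g 0 = v + t'" using f3 B by metis
      have "a * cnj (v + t) + g 0 - (a * cnj v + g 0) = (v + t) - v" using e1 e2 by simp
      hence at: "a * cnj t = t" by (simp add: algebra_simps)
      have "a * cnj (v + t') + g 0 - (a * cnj v + g 0) = (v + t') - v" using e1 e3 by simp
      hence at': "a * cnj t' = t'" by (simp add: algebra_simps)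
      have w: "t' * cnj t = t * cnj t'"
      proof -
        have "t' * cnj t = (a * cnj t') * cnj t" using at' by simp
        also have "\<dots> = (a * cnj t) * cnj t'" by (simp add: algebra_simps)
        also have "\<dots> = t * cnj t'" using at by simp
        finally show ?thesis .
      qed
      have "Im (t' * cnj t) = 0"
      proof -
        have "cnj (t' * cnj t) = cnj t' * t" by simp
        also have "\<dots> = t' * cnj t" by (metis w mult.commute)
        finally have "cnj (t' * cnj t) = t' * cnj t" .
        hence "Im (cnj (t' * cnj t)) = Im (t' * cnj t)" by simp
        hence "- Im (t' * cnj t) = Im (t' * cnj t)" by (simp only: cnj.sel)
        thus ?thesis by linarith
      qed
      hence ww: "t' * cnj t = of_real (Re (t' * cnj t))" by (simp add: complex_eq_iff)
      have tt: "t * cnj t = of_real ((cmod t)^2)" by (simp add: complex_mult_cnj cmod_power2)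
      have tn: "(cmod t)^2 \<noteq> 0" using t0 by simp
      have "t' * of_real ((cmod t)^2) = of_real (Re (t' * cnj t)) * t"
      proof -
        have "t' * of_real ((cmod t)^2) = (t' * cnj t) * t" using tt by (simp add: algebra_simps)
        also have "\<dots> = of_real (Re (t' * cnj t)) * t" using ww by simp
        finally show ?thesis .
      qed
      hence "t' = of_real (Re (t' * cnj t) / (cmod t)^2) * t" using tn
        by (simp add: field_simps)
      thus ?thesis using NM by blast
    qed
  qed
  moreover have "R > 0" unfolding R_def using norm_ge_zero[of v] norm_ge_zero[of t] norm_ge_zero[of t'] by linarith
  moreover have "e > 0" unfolding e_def using d1 d2 d3 by simp
  ultimately show ?thesis unfolding discrete_isom_group_def by blast
qed

theorem lemma3p1:
  fixes V :: "complex set" and E :: "complex set set"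
    and G :: "(complex \<Rightarrow> complex) set"
  assumes "plane_map V E"
    and "locally_finite_graph V E"
    and "one_ended V E"
    and "locally_finite_vertices V"
    and "isom_group G"
    and "acts_on_map G V E"
    and "quasi_transitive G V"
  shows "wallpaper_group G"
proof -
  have inf: "infinite V" using assms(1) unfolding plane_map_def by auto
  obtain t where t0: "t \<noteq> 0" and t: "(\<lambda>x. x + t) \<in> G"
    using transl_exists[OF assms(5,6,4,7) inf] by blast
  show ?thesis
  proof (cases "\<exists>t'. (\<lambda>x. x + t') \<in> G \<and> (\<forall>r::real. t' \<noteq> of_real r * t)")
    case True
    then obtain t' where t': "(\<lambda>x. x + t') \<in> G" and NM: "\<forall>r::real. t' \<noteq> of_real r * t" by blast
    obtain v where v: "v \<in> V" using inf by (metis finite.emptyI ex_in_conv)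
    have disc: "discrete_isom_group G" using discrete[OF assms(5,6,4) v t0 t t' NM] .
    have ne: "t \<noteq> t'" using NM[rule_format, of 1] by auto
    have t'0: "t' \<noteq> 0" using NM[rule_format, of 0] by auto
    have "t \<notin> span {t'}"
    proof
      assume "t \<in> span {t'}"
      then obtain k where k: "t = k *\<^sub>R t'" unfolding span_singleton by blast
      hence "k \<noteq> 0" using t0 by auto
      hence "t' = of_real (1 / k) * t" using k by (simp add: scaleR_conv_of_real)
      thus False using NM by blast
    qed
    moreover have "independent {t'}" using t'0 by simp
    ultimately have "independent {t, t'}" by (rule independent_insertI)
    thus ?thesis unfolding wallpaper_group_def using assms(5) disc ne t t' by blast
  next
    case False
    hence H: "\<forall>t'. (\<lambda>x. x + t') \<in> G \<longrightarrow> (\<exists>r::real. t' = of_real r * t)" by blast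
    show ?thesis using strip_contra[OF assms t0 t H] by blast
  qed
qed

end
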